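(* Let $n$ be a positive integer and $\Theta=\left[-\frac{1}{\sqrt n},+\frac{1}{\sqrt n}\right]^n$. Consider any (possibly randomized) learner that, for $t=1,\dots,T$, outputs $\hat c_t\in\Theta$ depending only on past observations $\{(X_i,x_i)\}_{i=1}^{t-1}$ (and its internal randomness). For any $T\ge n$ and $B>0$, there exist $c^*\in\Theta$ and non-empty compact sets $X_1,\dots,X_T\subseteq\mathbb{R}^n$ such that $$\max_{t=1,\dots,T}\max\{\langle c-c',x-x'\rangle: c,c'\in\Theta,\ x,x'\in X_t\}=B\quad\text{and}\quad\mathbb{E}\left[R^{c^*}_T\right]\ge\frac{Bn}{4},$$ where $R^{c^*}_T=\sum_{t=1}^T\langle c^*,x_t-\hat x_t\rangle$, $x_t\in\arg\max_{x\in X_t}\langle c^*,x\rangle$, $\hat x_t\in\arg\max_{x\in X_t}\langle\hat c_t,x\rangle$, and the expectation is over the learner's randomness. *)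

theory Defs
  imports "HOL-Probability.Probability"
begin

definition Theta :: "(real^'n::finite) set" where
  "Theta = {c. \<forall>i. \<bar>c $ i\<bar> \<le> 1 / sqrt (real CARD('n))}"

definition hist :: "(nat \<Rightarrow> 'a set) \<Rightarrow> (nat \<Rightarrow> 'a) \<Rightarrow> nat \<Rightarrow> ('a set \<times> 'a) list" where
  "hist X x t = map (\<lambda>i. (X i, x i)) [1..<t]"

text \<open>A tie-breaking rule: sel X c is a maximiser of the linear objective c over X
  (for non-empty compact X).\<close>
definition argmax_selector :: "('a::real_inner set \<Rightarrow> 'a \<Rightarrow> 'a) \<Rightarrow> bool" where
  "argmax_selector sel \<longleftrightarrow>
     (\<forall>X c. compact X \<and> X \<noteq> {} \<longrightarrow> sel X c \<in> X \<and> (\<forall>y\<in>X. c \<bullet> y \<le> c \<bullet> sel X c))"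

definition width :: "nat \<Rightarrow> (nat \<Rightarrow> (real^'n::finite) set) \<Rightarrow> real" where
  "width T X = (MAX t\<in>{1..T}. Sup {(c - c') \<bullet> (x - x') | c c' x x'.
        c \<in> Theta \<and> c' \<in> Theta \<and> x \<in> X t \<and> x' \<in> X t})"

definition regret ::
  "(nat \<Rightarrow> ((real^'n::finite) set \<times> (real^'n)) list \<Rightarrow> real^'n)
   \<Rightarrow> ((real^'n) set \<Rightarrow> real^'n \<Rightarrow> real^'n) \<Rightarrow> nat \<Rightarrow> real^'n \<Rightarrow> (nat \<Rightarrow> (real^'n) set) \<Rightarrow> real" where
  "regret L sel T cs X =
     (\<Sum>t=1..T. cs \<bullet> (sel (X t) cs - sel (X t) (L t (hist X (\<lambda>i. sel (X i) cs) t))))"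

end

theory Submission
  imports Defs
begin

theorem theorem3:
  fixes M :: "'w measure"
    and L :: "'w \<Rightarrow> nat \<Rightarrow> ((real^'n::finite) set \<times> (real^'n)) list \<Rightarrow> real^'n"
    and sel :: "(real^'n) set \<Rightarrow> real^'n \<Rightarrow> real^'n"
    and T :: nat and B :: real
  assumes "prob_space M"
    and "\<And>t h. (\<lambda>w. L w t h) \<in> borel_measurable M"
    and "\<And>w t h. w \<in> space M \<Longrightarrow> L w t h \<in> Theta"
    and "argmax_selector sel"
    and "\<And>X. sel X \<in> borel_measurable borel"
    and "T \<ge> CARD('n)" and "B > 0"
  shows "\<exists>cs X. cs \<in> Theta \<and> (\<forall>t\<in>{1..T}. compact (X t) \<and> X t \<noteq> {})
           \<and> width T X = B
           \<and> (\<integral>w. regret (L w) sel T cs X \<partial>M) \<ge> B * real CARD('n) / 4"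
proof -
  interpret P: prob_space M by (rule assms(1))
  define n where "n = CARD('n)"
  have npos: "n \<ge> 1" unfolding n_def using zero_less_card_finite by (simp add: Suc_le_eq)
  obtain e :: "nat \<Rightarrow> 'n" where ebij: "bij_betw e {1..n} UNIV"
  proof -
    have "\<exists>h. bij_betw h {1..card (UNIV::'n set)} (UNIV::'n set)"
      by (rule ex_bij_betw_nat_finite_1) simp
    then show ?thesis using that unfolding n_def by blast
  qed
  have einj: "\<And>i j. i \<in> {1..n} \<Longrightarrow> j \<in> {1..n} \<Longrightarrow> e i = e j \<Longrightarrow> i = j"
    using ebij unfolding bij_betw_def inj_on_def by blast
  define r where "r = 1 / sqrt (real n)"
  define a where "a = B * sqrt (real n) / 4"
  have rpos: "r > 0" and apos: "a > 0" using npos \<open>B>0\<close> by (auto simp: r_def a_def)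
  have ar: "a * r = B / 4" using npos by (simp add: a_def r_def)
  define X :: "nat \<Rightarrow> (real^'n) set" where
    "X t = (if t \<in> {1..n} then {axis (e t) a, axis (e t) (-a)} else {0})" for t
  define cv :: "('n \<Rightarrow> bool) \<Rightarrow> real^'n" where "cv s = (\<chi> j. if s j then r else -r)" for s
  have cv_nth: "cv s $ j = (if s j then r else -r)" for s j by (simp add: cv_def)
  have cv_Theta: "cv s \<in> Theta" for s 
  proof -
    have "\<bar>cv s $ i\<bar> = r" for i using rpos by (simp add: cv_nth)
    then show ?thesis unfolding Theta_def r_def n_def by simp
  qed
  have Xfin: "finite (X t)" "X t \<noteq> {}" for t by (auto simp: X_def)
  have Xcomp: "compact (X t)" for t by (rule finite_imp_compact[OF Xfin(1)])
  have AS: "\<And>Y c. compact Y \<Longrightarrow> Y \<noteq> {} \<Longrightarrow> sel Y c \<in> Y \<and> (\<forall>y\<in>Y. c \<bullet> y \<le> c \<bullet> sel Y c)"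
    using assms(4) unfolding argmax_selector_def by blast
  have selX: "sel (X t) c \<in> X t" for t c
    using AS[OF Xcomp Xfin(2)] by blast
  have selmax: "\<And>y. y \<in> X t \<Longrightarrow> c \<bullet> y \<le> c \<bullet> sel (X t) c" for t c
    using AS[OF Xcomp Xfin(2)] by blast
  have axne: "axis k a \<noteq> axis k (-a)" for k using apos by (simp add: axis_eq_axis)
  have selA: "sel (X t) (cv s) = axis (e t) (if s (e t) then a else -a)" if t: "t \<in> {1..n}" for t s
  proof -
    have XT: "X t = {axis (e t) a, axis (e t) (-a)}" using t by (simp add: X_def)
    have i1: "cv s \<bullet> axis (e t) a = (if s (e t) then r*a else -r*a)"
      by (simp add: inner_axis cv_nth inner_real_def)
    have i2: "cv s \<bullet> axis (e t) (-a) = (if s (e t) then -r*a else r*a)"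
      by (simp add: inner_axis cv_nth inner_real_def)
    have pos: "r * a > 0" using rpos apos by simp
    have m1: "cv s \<bullet> axis (e t) a \<le> cv s \<bullet> sel (X t) (cv s)" by (rule selmax) (simp add: XT)
    have m2: "cv s \<bullet> axis (e t) (-a) \<le> cv s \<bullet> sel (X t) (cv s)" by (rule selmax) (simp add: XT)
    from selX[of t "cv s"] XT have "sel (X t) (cv s) = axis (e t) a \<or> sel (X t) (cv s) = axis (e t) (-a)"
      by auto
    then show ?thesis using i1 i2 pos m1 m2 by (cases "s (e t)") auto
  qed
  define hs where "hs s t = hist X (\<lambda>i. sel (X i) (cv s)) t" for s t
  have sel0: "sel (X t) c = 0" if nt: "t \<notin> {1..n}" for t c
  proof -
    have "X t = {0}" using nt unfolding X_def by auto
    then show ?thesis using selX[of t c] by simp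
  qed
  have hs_eq: "hs s t = hs s' t" if ag: "\<forall>i\<in>{1..<t}. s (e i) = s' (e i)" for s s' t
    unfolding hs_def hist_def
  proof (rule map_cong[OF refl])
    fix i assume "i \<in> set [1..<t]"
    then have i: "i \<in> {1..<t}" by simp
    show "(X i, sel (X i) (cv s)) = (X i, sel (X i) (cv s'))"
    proof (cases "i \<in> {1..n}")
      case True then show ?thesis using selA[OF True, of s] selA[OF True, of s'] ag i by simp
    next
      case False then show ?thesis using sel0[OF False] by simp
    qed
  qed
  define R where "R s t w = cv s \<bullet> (sel (X t) (cv s) - sel (X t) (L w t (hs s t)))" for s t w
  have Rform: "R s t w = (if (sel (X t) (L w t (hs s t)) = axis (e t) a) = s (e t) then 0 else 2*a*r)"
    if t: "t \<in> {1..n}" for s t w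
  proof -
    have "sel (X t) (L w t (hs s t)) \<in> X t" by (rule selX)
    then have "sel (X t) (L w t (hs s t)) = axis (e t) a \<or> sel (X t) (L w t (hs s t)) = axis (e t) (-a)"
      using t by (simp add: X_def)
    then show ?thesis using axne[of "e t"] unfolding R_def selA[OF t]
      by (cases "s (e t)") (auto simp: inner_diff_right inner_axis cv_nth inner_real_def)
  qed
  have R0: "t \<notin> {1..n} \<Longrightarrow> R s t w = 0" for s t w by (simp add: R_def sel0)
  have Rmeas: "(\<lambda>w. R s t w) \<in> borel_measurable M" for s t
  proof -
    have "(\<lambda>w. sel (X t) (L w t (hs s t))) \<in> borel_measurable M"
      using measurable_compose[OF assms(2) assms(5)] .
    then show ?thesis unfolding R_def by measurable
  qed
  have Rbnd: "norm (R s t w) \<le> 2*a*r" for s t w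
  proof (cases "t \<in> {1..n}")
    case True then show ?thesis using Rform[OF True, of s w] rpos apos by simp
  next
    case False then show ?thesis using R0[OF False] rpos apos by simp
  qed
  have Rint: "integrable M (\<lambda>w. R s t w)" for s t
    by (rule P.integrable_const_bound[where B="2*a*r"]) (use Rbnd Rmeas in auto)
  have Rdep: "R s t w = R s' t w" if t: "t \<in> {1..n}" and ag: "\<forall>i\<in>{1..t}. s (e i) = s' (e i)" for s s' t w
  proof -
    have "hs s t = hs s' t" using ag by (intro hs_eq) auto
    moreover have "s (e t) = s' (e t)" using ag t by auto
    ultimately show ?thesis using Rform[OF t, of s w] Rform[OF t, of s' w] by simp
  qed
  define Sg where "Sg = rec_nat (\<lambda>_. True) (\<lambda>k sk. if a*r \<le> (\<integral>w. R (sk(e (Suc k) := True)) (Suc k) w \<partial>M)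
      then sk(e (Suc k) := True) else sk(e (Suc k) := False))"
  have SgSuc: "Sg (Suc k) = (if a*r \<le> (\<integral>w. R ((Sg k)(e (Suc k) := True)) (Suc k) w \<partial>M)
      then (Sg k)(e (Suc k) := True) else (Sg k)(e (Suc k) := False))" for k
    by (simp add: Sg_def)
  have stable: "k \<le> m \<Longrightarrow> m \<le> n \<Longrightarrow> j \<in> {1..k} \<Longrightarrow> Sg m (e j) = Sg k (e j)" for k m j
  proof (induction m)
    case 0 then show ?case by simp
  next
    case (Suc m)
    show ?case
    proof (cases "k = Suc m")
      case True then show ?thesis by simp
    next
      case False
      then have km: "k \<le> m" using Suc by simp
      have "e j \<noteq> e (Suc m)"
      proof
        assume "e j = e (Suc m)"
        then have "j = Suc m" using einj Suc.prems km by auto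
        then show False using Suc.prems km by auto
      qed
      then have "Sg (Suc m) (e j) = Sg m (e j)" by (simp add: SgSuc)
      then show ?thesis using Suc km by simp
    qed
  qed
  have step: "a*r \<le> (\<integral>w. R (Sg t) t w \<partial>M)" if t: "t \<in> {1..n}" for t
  proof -
    obtain k where tk: "t = Suc k" using t by (cases t) auto
    define sT where "sT = (Sg k)(e t := True)"
    define sF where "sF = (Sg k)(e t := False)"
    have "hs sT t = hs sF t"
    proof (intro hs_eq ballI)
      fix i assume i: "i \<in> {1..<t}"
      then have "e i \<noteq> e t" using einj[of i t] t by auto
      then show "sT (e i) = sF (e i)" by (simp add: sT_def sF_def)
    qed
    then have sum: "R sF t w = 2*a*r - R sT t w" for w
      using Rform[OF t, of sF w] Rform[OF t, of sT w] by (simp add: sT_def sF_def)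
    show ?thesis
    proof (cases "a*r \<le> (\<integral>w. R sT t w \<partial>M)")
      case True
      then have "Sg t = sT" by (simp add: tk SgSuc sT_def)
      then show ?thesis using True by simp
    next
      case False
      then have "Sg t = sF" by (simp add: tk SgSuc sT_def sF_def)
      moreover have "(\<integral>w. R sF t w \<partial>M) = 2*a*r - (\<integral>w. R sT t w \<partial>M)"
        unfolding sum using Rint by (simp add: P.prob_space)
      ultimately show ?thesis using False by simp
    qed
  qed
  define cs where "cs = cv (Sg n)"
  have reg: "regret (L w) sel T cs X = (\<Sum>t=1..T. R (Sg n) t w)" for w
    by (simp add: regret_def R_def hs_def cs_def)
  have lower: "(if t \<le> n then a*r else 0) \<le> (\<integral>w. R (Sg n) t w \<partial>M)" if "t \<in> {1..T}" for t
  proof (cases "t \<le> n")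
    case True
    then have t: "t \<in> {1..n}" using that by simp
    have "R (Sg n) t w = R (Sg t) t w" for w
      using stable[of t n] True t by (intro Rdep[OF t]) auto
    then show ?thesis using step[OF t] True by simp
  next
    case False then show ?thesis using R0 by simp
  qed
  have "(\<Sum>t=1..T. (if t \<le> n then a*r else 0)) = (\<Sum>t=1..n. a*r)"
    using assms(6) unfolding n_def by (intro sum.mono_neutral_cong_right) auto
  then have sumeq: "(\<Sum>t=1..T. (if t \<le> n then a*r else 0)) = real n * (a*r)" by simp
  have intreg: "B * real CARD('n) / 4 \<le> (\<integral>w. regret (L w) sel T cs X \<partial>M)"
  proof -
    have "(\<integral>w. regret (L w) sel T cs X \<partial>M) = (\<Sum>t=1..T. (\<integral>w. R (Sg n) t w \<partial>M))"
      unfolding reg using Rint by (simp add: integral_sum)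
    also have "\<dots> \<ge> (\<Sum>t=1..T. (if t \<le> n then a*r else 0))"
      by (rule sum_mono) (rule lower)
    finally show ?thesis using sumeq ar unfolding n_def by (simp add: algebra_simps)
  qed
  have Th: "\<bar>c $ k\<bar> \<le> r" if "c \<in> Theta" for c :: "real^'n" and k
    using that unfolding Theta_def r_def n_def by simp
  have ident: "(c - c') \<bullet> (axis k b1 - axis k b2) = (c $ k - c' $ k) * (b1 - b2)" for c c' :: "real^'n" and k b1 b2
    by (simp add: inner_diff_left inner_diff_right inner_axis inner_real_def algebra_simps)
  have Wt: "Sup {(c - c') \<bullet> (x - x') | c c' x x'. c \<in> Theta \<and> c' \<in> Theta \<and> x \<in> X t \<and> x' \<in> X t}
      = (if t \<in> {1..n} then B else 0)" for t
  proof (cases "t \<in> {1..n}")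
    case True
    let ?k = "e t"
    have XT: "X t = {axis ?k a, axis ?k (-a)}" using True by (simp add: X_def)
    have mem: "B \<in> {(c - c') \<bullet> (x - x') | c c' x x'. c \<in> Theta \<and> c' \<in> Theta \<and> x \<in> X t \<and> x' \<in> X t}"
    proof -
      have "(cv (\<lambda>_. True) - cv (\<lambda>_. False)) \<bullet> (axis ?k a - axis ?k (-a)) = B"
        unfolding ident cv_nth using ar by (simp add: algebra_simps)
      then show ?thesis using cv_Theta XT by blast
    qed
    have ub: "y \<le> B" if yin: "y \<in> {(c - c') \<bullet> (x - x') | c c' x x'. c \<in> Theta \<and> c' \<in> Theta \<and> x \<in> X t \<and> x' \<in> X t}" for y
    proof -
      obtain c c' x x' where y: "y = (c - c') \<bullet> (x - x')" and c: "c \<in> Theta" "c' \<in> Theta"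
        and x: "x \<in> X t" "x' \<in> X t" using yin by blast
      obtain b1 where b1: "x = axis ?k b1" "\<bar>b1\<bar> \<le> a" using x(1) XT apos by auto
      obtain b2 where b2: "x' = axis ?k b2" "\<bar>b2\<bar> \<le> a" using x(2) XT apos by auto
      have "y = (c $ ?k - c' $ ?k) * (b1 - b2)" using y b1 b2 ident by simp
      also have "\<dots> \<le> \<bar>c $ ?k - c' $ ?k\<bar> * \<bar>b1 - b2\<bar>" by (simp add: abs_mult[symmetric])
      also have "\<dots> \<le> (2*r) * (2*a)"
      proof (rule mult_mono)
        show "\<bar>c $ ?k - c' $ ?k\<bar> \<le> 2 * r" using Th[OF c(1), of ?k] Th[OF c(2), of ?k] by linarith
        show "\<bar>b1 - b2\<bar> \<le> 2 * a" using b1 b2 by linarith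
      qed (use rpos in auto)
      also have "\<dots> = B" using ar by (simp add: algebra_simps)
      finally show ?thesis .
    qed
    have "Sup {(c - c') \<bullet> (x - x') | c c' x x'. c \<in> Theta \<and> c' \<in> Theta \<and> x \<in> X t \<and> x' \<in> X t} = B"
      by (rule cSup_eq_maximum[OF mem]) (rule ub)
    then show ?thesis using True by simp
  next
    case False
    have XT: "X t = {0}" using False unfolding X_def by auto
    have "{(c - c') \<bullet> (x - x') | c c' x x'. c \<in> Theta \<and> c' \<in> Theta \<and> x \<in> X t \<and> x' \<in> X t} = {0}"
      using cv_Theta XT by auto
    then show ?thesis using False by (simp only: if_False cSup_singleton)
  qed
  have width: "width T X = B"
    unfolding width_def Wt
  proof (rule Max_eqI)
    show "finite ((\<lambda>t. if t \<in> {1..n} then B else 0) ` {1..T})" by simp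
    show "\<And>y. y \<in> (\<lambda>t. if t \<in> {1..n} then B else 0) ` {1..T} \<Longrightarrow> y \<le> B" using \<open>B > 0\<close> by auto
    have "n \<le> T" using assms(6) unfolding n_def .
    then have o1: "1 \<in> {1..T}" "1 \<in> {1..n}" using npos by auto
    show "B \<in> (\<lambda>t. if t \<in> {1..n} then B else 0) ` {1..T}"
      by (rule image_eqI[where x=1]) (use o1 in simp_all)
  qed
  have "cs \<in> Theta" unfolding cs_def by (rule cv_Theta)
  moreover have "\<forall>t\<in>{1..T}. compact (X t) \<and> X t \<noteq> {}" using Xcomp Xfin(2) by simp
  ultimately show ?thesis using width intreg by blast
qed
end
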